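(* Let $x_0<\dots<x_n$ and $\hat x_0<\dots<\hat x_n$ be real numbers with $\hat x_0=x_0$, $\hat x_n=x_n$, such that $\max_{k}\sum_{j\neq k}|r_{jk}(\mathbf{x},\hat{\mathbf{x}})|<0.01$ and $\max_k|\hat x_k-x_k|\le0.1\min_{j\neq k}|x_j-x_k|$. Let $f:[x_0,x_n]\to\mathbb{R}$ be Lipschitz with constant $L$, and $y_k=f(\hat x_k)$. Then for every $t\in[x_0,x_n]$, \[ |E(t;\mathbf{y},\mathbf{z})|\le L\,\rho(\hat{\mathbf{x}})\,\|\mathbf{z}\|_1+\Lambda(\hat{\mathbf{x}})\,\|\mathbf{z}\|_\infty\,\|f-P_{\mathbf{y}}\|_\infty . \]
   Context: $r_{jk}(\mathbf{x},\hat{\mathbf{x}}):=\frac{\hat x_k-\hat x_j}{x_k-x_j}-1$; $\lambda_k(\mathbf{x}):=1/\prod_{j\neq k}(x_k-x_j)$; $z_k=(\lambda_k(\mathbf{x})-\lambda_k(\hat{\mathbf{x}}))/\lambda_k(\hat{\mathbf{x}})$. $\ell_k$ is the $k$-th Lagrange polynomial for the nodes $\hat{\mathbf{x}}$; $\rho(\hat{\mathbf{x}}):=\max_{0\le k\le n}\max_{x_0\le t\le x_n}|\ell_k(t)(t-\hat x_k)|$; $\Lambda(\hat{\mathbf{x}}):=\max_{t\in[x_0,x_n]}\sum_k|\ell_k(t)|$. For $\mathbf{v}\in\mathbb{R}^{n+1}$, $P_{\mathbf{v}}$ is the polynomial of degree $\le n$ with $P_{\mathbf{v}}(\hat x_k)=v_k$;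 $E(t;\mathbf{y},\mathbf{z}):=P_{\mathbf{y}\mathbf{z}}(t)-P_{\mathbf{y}}(t)P_{\mathbf{z}}(t)$ with $(\mathbf{yz})_k=y_kz_k$. $\|\cdot\|_\infty$ for functions is the sup norm on $[x_0,x_n]$. *)

theory Defs
  imports "HOL-Analysis.Analysis"
begin

definition r_jk :: "(nat \<Rightarrow> real) \<Rightarrow> (nat \<Rightarrow> real) \<Rightarrow> nat \<Rightarrow> nat \<Rightarrow> real" where
  "r_jk x xh j k = (xh k - xh j) / (x k - x j) - 1"

definition lam :: "nat \<Rightarrow> (nat \<Rightarrow> real) \<Rightarrow> nat \<Rightarrow> real" where
  "lam n x k = 1 / (\<Prod>j\<in>{0..n}-{k}. (x k - x j))"

definition zvec :: "nat \<Rightarrow> (nat \<Rightarrow> real) \<Rightarrow> (nat \<Rightarrow> real) \<Rightarrow> nat \<Rightarrow> real" where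
  "zvec n x xh k = (lam n x k - lam n xh k) / lam n xh k"

definition lagr :: "nat \<Rightarrow> (nat \<Rightarrow> real) \<Rightarrow> nat \<Rightarrow> real \<Rightarrow> real" where
  "lagr n xh k t = (\<Prod>j\<in>{0..n}-{k}. (t - xh j) / (xh k - xh j))"

definition interp :: "nat \<Rightarrow> (nat \<Rightarrow> real) \<Rightarrow> (nat \<Rightarrow> real) \<Rightarrow> real \<Rightarrow> real" where
  "interp n xh v t = (\<Sum>k\<in>{0..n}. v k * lagr n xh k t)"

definition Eerr :: "nat \<Rightarrow> (nat \<Rightarrow> real) \<Rightarrow> (nat \<Rightarrow> real) \<Rightarrow> (nat \<Rightarrow> real) \<Rightarrow> real \<Rightarrow> real" where
  "Eerr n xh y z t = interp n xh (\<lambda>k. y k * z k) t - interp n xh y t * interp n xh z t"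

definition rho :: "nat \<Rightarrow> (nat \<Rightarrow> real) \<Rightarrow> real \<Rightarrow> real \<Rightarrow> real" where
  "rho n xh a b = (SUP p\<in>{0..n} \<times> {a..b}. \<bar>lagr n xh (fst p) (snd p) * (snd p - xh (fst p))\<bar>)"

definition lebesgue_const :: "nat \<Rightarrow> (nat \<Rightarrow> real) \<Rightarrow> real \<Rightarrow> real \<Rightarrow> real" where
  "lebesgue_const n xh a b = (SUP t\<in>{a..b}. (\<Sum>k\<in>{0..n}. \<bar>lagr n xh k t\<bar>))"

definition supnorm_on :: "real \<Rightarrow> real \<Rightarrow> (real \<Rightarrow> real) \<Rightarrow> real" where
  "supnorm_on a b g = (SUP t\<in>{a..b}. \<bar>g t\<bar>)"

end

theory Submission
  imports Defs
begin

lemma mono_nodes: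
  fixes xh :: "nat \<Rightarrow> real"
  assumes "\<forall>k<n. xh k < xh (Suc k)" "i \<le> j" "j \<le> n"
  shows "xh i \<le> xh j"
  using assms(2,3)
proof (induction j)
  case 0 then show ?case by simp
next
  case (Suc j)
  show ?case
  proof (cases "i = Suc j")
    case False
    then have "i \<le> j" using Suc.prems by simp
    then have "xh i \<le> xh j" using Suc by simp
    moreover have "xh j < xh (Suc j)" using assms(1) Suc.prems by simp
    ultimately show ?thesis by simp
  qed simp
qed

lemma cont_lagr: "continuous_on S (lagr n xh k)"
  unfolding lagr_def divide_inverse by (intro continuous_intros)

lemma cont_interp: "continuous_on S (interp n xh v)"
  unfolding interp_def using cont_lagr by (intro continuous_intros) auto

lemma bdd_cont: "continuous_on {a..b} (g::real\<Rightarrow>real) \<Longrightarrow> bdd_above (g ` {a..b})"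
  by (intro bounded_imp_bdd_above compact_imp_bounded compact_continuous_image) auto

theorem lemma5:
  fixes n :: nat and x xh :: "nat \<Rightarrow> real" and f :: "real \<Rightarrow> real" and L :: real and t :: real
  assumes x_incr: "\<forall>k<n. x k < x (Suc k)"
    and xh_incr: "\<forall>k<n. xh k < xh (Suc k)"
    and ends0: "xh 0 = x 0" and endsn: "xh n = x n"
    and rsmall: "\<forall>k\<in>{0..n}. (\<Sum>j\<in>{0..n}-{k}. \<bar>r_jk x xh j k\<bar>) < 0.01"
    and pert: "\<forall>k\<in>{0..n}. \<forall>j\<in>{0..n}. j \<noteq> k \<longrightarrow> \<bar>xh k - x k\<bar> \<le> 0.1 * \<bar>x j - x k\<bar>"
    and lip: "L-lipschitz_on {x 0..x n} f"
    and t: "t \<in> {x 0..x n}"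
  shows "\<bar>Eerr n xh (\<lambda>k. f (xh k)) (zvec n x xh) t\<bar>
           \<le> L * rho n xh (x 0) (x n) * (\<Sum>k\<in>{0..n}. \<bar>zvec n x xh k\<bar>)
             + lebesgue_const n xh (x 0) (x n) * (MAX k\<in>{0..n}. \<bar>zvec n x xh k\<bar>)
               * supnorm_on (x 0) (x n) (\<lambda>s. f s - interp n xh (\<lambda>k. f (xh k)) s)"
proof -
  define a where "a = x 0"
  define b where "b = x n"
  define z where "z = zvec n x xh"
  define y where "y = (\<lambda>k. f (xh k))"
  define P where "P = interp n xh y"
  define l where "l = (\<lambda>k. lagr n xh k t)"
  define R where "R = rho n xh a b"
  define Lam where "Lam = lebesgue_const n xh a b"
  define M where "M = (MAX k\<in>{0..n}. \<bar>z k\<bar>)"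
  define S where "S = supnorm_on a b (\<lambda>s. f s - P s)"
  have L0: "0 \<le> L" using lip by (rule lipschitz_on_nonneg)
  have xhin: "xh k \<in> {a..b}" if "k \<in> {0..n}" for k
    using mono_nodes[OF xh_incr, of 0 k] mono_nodes[OF xh_incr, of k n] that ends0 endsn
    by (auto simp: a_def b_def)
  have tin: "t \<in> {a..b}" using t by (simp add: a_def b_def)
  have E: "Eerr n xh y z t = (\<Sum>k\<in>{0..n}. z k * l k * (y k - P t))"
    unfolding Eerr_def P_def interp_def l_def
    by (simp add: sum_distrib_left sum_distrib_right sum_subtractf algebra_simps)
  have Rb: "\<bar>l k * (t - xh k)\<bar> \<le> R" if "k \<in> {0..n}" for k
  proof -
    let ?g = "\<lambda>p. \<bar>lagr n xh (fst p) (snd p) * (snd p - xh (fst p))\<bar>"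
    have eq: "?g ` ({0..n} \<times> {a..b}) = (\<Union>k\<in>{0..n}. (\<lambda>s. ?g (k, s)) ` {a..b})"
      by force
    have bd: "bdd_above (?g ` ({0..n} \<times> {a..b}))"
      unfolding eq
    proof (subst bdd_above_UN, simp, intro ballI)
      fix j show "bdd_above ((\<lambda>s. ?g (j, s)) ` {a..b})"
        by (rule bdd_cont) (simp, intro continuous_intros cont_lagr)
    qed
    have "(k, t) \<in> {0..n} \<times> {a..b}" using that tin by auto
    from cSUP_upper[OF this bd] have "?g (k, t) \<le> R" unfolding R_def rho_def by simp
    then show ?thesis by (simp add: l_def)
  qed
  have Lamb: "(\<Sum>k\<in>{0..n}. \<bar>l k\<bar>) \<le> Lam"
    unfolding Lam_def lebesgue_const_def l_def
    by (rule cSUP_upper[OF tin], rule bdd_cont) (intro continuous_intros cont_lagr[THEN continuous_on_compose2], auto)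
  have Sb: "\<bar>f t - P t\<bar> \<le> S"
  proof -
    have cf: "continuous_on {a..b} f" using lipschitz_on_continuous_on[OF lip] by (simp add: a_def b_def)
    show ?thesis unfolding S_def supnorm_on_def
      by (rule cSUP_upper[OF tin], rule bdd_cont)
        (intro continuous_intros cf, simp add: P_def cont_interp)
  qed
  have S0: "0 \<le> S" using Sb by linarith
  have Mb: "\<bar>z k\<bar> \<le> M" if "k \<in> {0..n}" for k
    unfolding M_def using that by (intro Max_ge) auto
  have M0: "0 \<le> M" using Mb[of 0] by force
  have lipk: "\<bar>y k - f t\<bar> \<le> L * \<bar>t - xh k\<bar>" if "k \<in> {0..n}" for k
    using lipschitz_onD[OF lip, of "xh k" t] xhin[OF that] tin
    by (simp add: y_def a_def b_def dist_real_def abs_minus_commute)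
  have "\<bar>Eerr n xh y z t\<bar> \<le> (\<Sum>k\<in>{0..n}. \<bar>z k * l k * (y k - P t)\<bar>)"
    unfolding E by (rule sum_abs)
  also have "\<dots> \<le> (\<Sum>k\<in>{0..n}. \<bar>z k\<bar> * (L * R) + M * \<bar>l k\<bar> * S)"
  proof (rule sum_mono)
    fix k assume k: "k \<in> {0..n}"
    have "\<bar>z k * l k * (y k - P t)\<bar> \<le> \<bar>z k\<bar> * (\<bar>l k\<bar> * \<bar>y k - f t\<bar>) + \<bar>z k\<bar> * \<bar>l k\<bar> * \<bar>f t - P t\<bar>"
    proof -
      have "\<bar>y k - P t\<bar> \<le> \<bar>y k - f t\<bar> + \<bar>f t - P t\<bar>" by linarith
      then have "\<bar>z k\<bar> * \<bar>l k\<bar> * \<bar>y k - P t\<bar> \<le> \<bar>z k\<bar> * \<bar>l k\<bar> * (\<bar>y k - f t\<bar> + \<bar>f t - P t\<bar>)"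
        by (intro mult_left_mono) auto
      moreover have "\<bar>z k * l k * (y k - P t)\<bar> = \<bar>z k\<bar> * \<bar>l k\<bar> * \<bar>y k - P t\<bar>" by (simp add: abs_mult)
      ultimately show ?thesis by (simp add: algebra_simps)
    qed
    also have "\<dots> \<le> \<bar>z k\<bar> * (L * R) + M * \<bar>l k\<bar> * S"
    proof (rule add_mono)
      have "\<bar>l k\<bar> * \<bar>y k - f t\<bar> \<le> \<bar>l k\<bar> * (L * \<bar>t - xh k\<bar>)"
        by (intro mult_left_mono lipk k) auto
      also have "\<dots> = L * \<bar>l k * (t - xh k)\<bar>" by (simp add: abs_mult)
      also have "\<dots> \<le> L * R" by (intro mult_left_mono Rb k L0)
      finally show "\<bar>z k\<bar> * (\<bar>l k\<bar> * \<bar>y k - f t\<bar>) \<le> \<bar>z k\<bar> * (L * R)"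
        by (intro mult_left_mono) auto
      show "\<bar>z k\<bar> * \<bar>l k\<bar> * \<bar>f t - P t\<bar> \<le> M * \<bar>l k\<bar> * S"
        by (intro mult_mono Mb k Sb) (auto simp: M0)
    qed
    finally show "\<bar>z k * l k * (y k - P t)\<bar> \<le> \<bar>z k\<bar> * (L * R) + M * \<bar>l k\<bar> * S" .
  qed
  also have "\<dots> = L * R * (\<Sum>k\<in>{0..n}. \<bar>z k\<bar>) + M * (\<Sum>k\<in>{0..n}. \<bar>l k\<bar>) * S"
    by (simp add: sum.distrib sum_distrib_left sum_distrib_right algebra_simps)
  also have "\<dots> \<le> L * R * (\<Sum>k\<in>{0..n}. \<bar>z k\<bar>) + Lam * M * S"
  proof -
    have "M * (\<Sum>k\<in>{0..n}. \<bar>l k\<bar>) \<le> M * Lam" by (intro mult_left_mono Lamb M0)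
    then have "M * (\<Sum>k\<in>{0..n}. \<bar>l k\<bar>) * S \<le> M * Lam * S" by (intro mult_right_mono S0)
    then show ?thesis by (simp add: algebra_simps)
  qed
  finally show ?thesis
    by (simp add: a_def b_def z_def y_def P_def R_def Lam_def M_def S_def)
qed

end
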